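(* Let $p$ be an odd prime, $v$ an integer with $1<v<p-1$, $g\in\{2,\dots,p-1\}$ a primitive root modulo $p$, and $t\ge1$. For $z\in\{0,\dots,v-1\}^t$ let $\lambda(z)=\#\{x\in\{0,\dots,p-2\}:\ (g^{x+\iota}\,\%\,p)\,\%\,v=z(\iota)\ \forall\,0\le\iota<t\}$. If $p\ge v\,g^{t-1}$ and $g\ge v$, then $\lambda(z)>0$ for all $z\in\{0,\dots,v-1\}^t$.
   Context: $x\,\%\,m$ denotes the least nonnegative remainder of the integer $x$ modulo $m$. *)

theory Defs
  imports "HOL-Number_Theory.Number_Theory"
begin

definition lam :: "nat \<Rightarrow> nat \<Rightarrow> nat \<Rightarrow> nat \<Rightarrow> (nat \<Rightarrow> nat) \<Rightarrow> nat" where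
  "lam p v g t z = card {x \<in> {0..p-2}. \<forall>i<t. (g ^ (x + i) mod p) mod v = z i}"

end

theory Submission imports Defs begin

lemma digits_exist:
  fixes g v :: nat and c :: "nat \<Rightarrow> int"
  assumes "0 < v" "v \<le> g"
  shows "\<exists>K < g^n. \<forall>j<n. int (K div g^j) mod int v = c (n - j) mod int v"
proof (induction n)
  case 0
  then show ?case by simp
next
  case (Suc n)
  then obtain K0 where K0: "K0 < g^n" "\<forall>j<n. int (K0 div g^j) mod int v = c (n - j) mod int v" by blast
  define d where "d = nat ((c (Suc n) - int (g*K0)) mod int v)"
  have d0: "int d = (c (Suc n) - int (g*K0)) mod int v" unfolding d_def using assms by simp
  have dv: "d < v" using d0 assms
    by (metis of_nat_less_iff pos_mod_bound of_nat_0_less_iff)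
  define K where "K = g*K0 + d"
  have gpos: "g > 0" using assms by simp
  have KdivG: "K div g = K0" unfolding K_def using dv assms gpos by simp
  have "K < g * g^n"
  proof -
    have "K < g*K0 + g" unfolding K_def using dv assms by simp
    also have "\<dots> = g * (K0 + 1)" by simp
    also have "\<dots> \<le> g * g^n" using K0(1) by (intro mult_le_mono2) simp
    finally show ?thesis .
  qed
  moreover have "\<forall>j<Suc n. int (K div g^j) mod int v = c (Suc n - j) mod int v"
  proof (intro allI impI)
    fix j assume j: "j < Suc n"
    show "int (K div g^j) mod int v = c (Suc n - j) mod int v"
    proof (cases j)
      case 0
      have "int K = int (g*K0) + (c (Suc n) - int (g*K0)) mod int v" unfolding K_def using d0 by simp
      hence "int K mod int v = (int (g*K0) + (c (Suc n) - int (g*K0))) mod int v"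
        by (metis mod_add_right_eq)
      then show ?thesis using 0 by simp
    next
      case (Suc j')
      have "K div g^j = K0 div g^j'" using Suc KdivG
        by (simp add: div_mult2_eq mult.commute)
      then show ?thesis using K0(2) Suc j by simp
    qed
  qed
  ultimately show ?case by auto
qed

theorem corollary5:
  fixes p v g t :: nat and z :: "nat \<Rightarrow> nat"
  assumes "prime p" and "odd p"
    and "1 < v" and "v < p - 1"
    and "g \<in> {2..p-1}" and "residue_primroot p g"
    and "t \<ge> 1"
    and "p \<ge> v * g ^ (t - 1)" and "g \<ge> v"
    and "\<forall>i<t. z i < v"
  shows "lam p v g t z > 0"
proof -
  define n where "n = t - 1"
  define D where "D = g ^ n"
  have gpos: "g > 0" using assms(5) by simp
  have Dpos: "D > 0" unfolding D_def using gpos by simp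
  have p1: "p > 1" using assms(1) prime_gt_1_nat by blast
  have cop: "coprime (int p) (int v)"
  proof -
    have "\<not> p dvd v" using assms(3,4) by (auto dest: dvd_imp_le)
    hence "coprime p v" using assms(1) by (simp add: prime_imp_coprime)
    thus ?thesis by simp
  qed
  obtain q :: int where q: "[int p * q = 1] (mod int v)"
    using cong_solve_coprime_int[OF cop] by blast
  define c where "c i = q * (int (z 0) * int g ^ i - int (z i))" for i
  obtain K where K: "K < g^n" "\<forall>j<n. int (K div g^j) mod int v = c (n - j) mod int v"
    using digits_exist[where g=g and v=v and c=c and n=n] assms(3,9) by auto
  have A: "int (K div g^(n-i)) mod int v = c i mod int v" if "i < t" for i
  proof (cases "i = 0")
    case True
    then show ?thesis using K(1) by (simp add: c_def)
  next
    case False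
    then show ?thesis using K(2)[rule_format, of "n - i"] that n_def by simp
  qed
  have Dv: "D * v < p"
  proof -
    have "D * v \<le> p" using assms(8) unfolding D_def n_def by (simp add: mult.commute)
    moreover have "D * v \<noteq> p"
    proof
      assume "D * v = p"
      hence "v dvd p" by (metis dvd_triv_right)
      hence "v = 1 \<or> v = p" using assms(1) prime_nat_iff by blast
      thus False using assms(3,4) by auto
    qed
    ultimately show ?thesis by simp
  qed
  define m where "m = K*p div D + 1"
  have m1: "K*p < D*m"
  proof -
    have e: "D*(K*p div D) + K*p mod D = K*p" by (rule mult_div_mod_eq)
    have "K*p mod D < D" using Dpos by simp
    hence "K*p < D*(K*p div D) + D" using e by linarith
    thus ?thesis unfolding m_def by (simp add: algebra_simps)
  qed
  have m2: "D*m \<le> K*p + D"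
  proof -
    have "D*(K*p div D) \<le> K*p" by (simp add: mult.commute)
    thus ?thesis unfolding m_def by (simp add: algebra_simps)
  qed
  define r where "r = nat ((int (z 0) - int m) mod int v)"
  have r0: "int r = (int (z 0) - int m) mod int v" unfolding r_def using assms(3) by simp
  have rv: "r < v" using r0 assms(3)
    by (metis of_nat_less_iff pos_mod_bound of_nat_0_less_iff less_trans zero_less_one)
  define w where "w = m + r"
  have z0v: "z 0 < v" using assms(7,10) by auto
  have wmod: "int w mod int v = int (z 0)"
  proof -
    have "int w = int m + (int (z 0) - int m) mod int v" unfolding w_def using r0 by simp
    hence "int w mod int v = (int m + (int (z 0) - int m)) mod int v"
      by (metis mod_add_right_eq)
    thus ?thesis using z0v by simp
  qed
  have w1: "K*p < D*w" using m1 unfolding w_def by (simp add: algebra_simps)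
  have w2: "D*w < (K+1)*p"
  proof -
    have "D*w = D*m + D*r" unfolding w_def by (simp add: algebra_simps)
    also have "\<dots> \<le> K*p + D + D*r" using m2 by simp
    also have "\<dots> = K*p + D*(r+1)" by (simp add: algebra_simps)
    also have "\<dots> \<le> K*p + D*v" using rv by (intro add_left_mono mult_le_mono2) simp
    also have "\<dots> < K*p + p" using Dv by simp
    finally show ?thesis by (simp add: algebra_simps)
  qed
  have wpos: "w > 0" using w1 by (metis mult_0_right not_less0 neq0_conv)
  have wp: "w < p"
  proof -
    have "K + 1 \<le> D" using K(1) unfolding D_def by simp
    hence "(K+1)*p \<le> D*p" by (rule mult_le_mono1)
    hence "D*w < D*p" using w2 by linarith
    thus ?thesis by simp
  qed
  have wD: "(w*D) div p = K"
    using w1 w2 by (intro div_nat_eqI) (auto simp: algebra_simps)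
  have B: "(w*g^i mod p) mod v = z i" if "i < t" for i
  proof -
    have Dsplit: "D = g^i * g^(n-i)" unfolding D_def using that n_def by (simp add: power_add[symmetric])
    have "(w*g^i) div p = (w*g^i*g^(n-i)) div (p*g^(n-i))" using gpos by simp
    also have "\<dots> = (w*D) div p div g^(n-i)" by (simp add: Dsplit div_mult2_eq mult.assoc)
    also have "\<dots> = K div g^(n-i)" using wD by simp
    finally have dv: "(w*g^i) div p = K div g^(n-i)" .
    have "w*g^i mod p = w*g^i - p * (K div g^(n-i))" using dv by (simp add: minus_div_mult_eq_mod[symmetric] mult.commute)
    moreover have "p * (K div g^(n-i)) \<le> w*g^i" using times_div_less_eq_dividend[of p "w*g^i"] dv by simp
    ultimately have e: "int (w*g^i mod p) = int w * int g ^ i - int p * int (K div g^(n-i))" by simp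
    have c1: "[int w = int (z 0)] (mod int v)" using wmod z0v unfolding cong_def by simp
    have c2: "[int (K div g^(n-i)) = c i] (mod int v)" using A[OF that] unfolding cong_def .
    have cA: "[int w * int g ^ i - int p * int (K div g^(n-i)) = int (z 0) * int g ^ i - int p * c i] (mod int v)"
      by (intro cong_diff cong_mult c1 c2 cong_refl)
    have "int p * c i = (int p * q) * (int (z 0) * int g ^ i - int (z i))" unfolding c_def by (simp add: algebra_simps)
    moreover have "[(int p * q) * (int (z 0) * int g ^ i - int (z i)) = 1 * (int (z 0) * int g ^ i - int (z i))] (mod int v)"
      by (intro cong_mult q cong_refl)
    ultimately have "[int (z 0) * int g ^ i - int p * c i = int (z 0) * int g ^ i - 1 * (int (z 0) * int g ^ i - int (z i))] (mod int v)"
      by (metis cong_diff cong_refl)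
    with cA have "[int w * int g ^ i - int p * int (K div g^(n-i)) = int (z 0) * int g ^ i - 1 * (int (z 0) * int g ^ i - int (z i))] (mod int v)"
      by (rule cong_trans)
    hence "[int (w*g^i mod p) = int (z i)] (mod int v)" using e by simp
    hence "int (w*g^i mod p) mod int v = int (z i)" using assms(10) that unfolding cong_def by simp
    thus ?thesis by (metis of_nat_eq_iff of_nat_mod)
  qed
  have "w \<in> totatives p" using wpos wp totatives_prime[OF assms(1)] by auto
  then obtain x where x: "x < totient p" "g^x mod p = w"
    using residue_primroot_is_generator[OF p1 assms(6)] unfolding bij_betw_def by force
  have xr: "x \<le> p - 2" using x(1) totient_prime[OF assms(1)] by simp
  have "\<forall>i<t. (g ^ (x + i) mod p) mod v = z i"
  proof (intro allI impI)
    fix i assume "i < t"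
    have "g ^ (x + i) mod p = (g^x mod p * g^i) mod p" by (simp add: power_add mod_mult_left_eq)
    thus "(g ^ (x + i) mod p) mod v = z i" using B[OF \<open>i < t\<close>] x(2) by simp
  qed
  hence "x \<in> {x \<in> {0..p-2}. \<forall>i<t. (g ^ (x + i) mod p) mod v = z i}" using xr by simp
  hence "{x \<in> {0..p-2}. \<forall>i<t. (g ^ (x + i) mod p) mod v = z i} \<noteq> {}" by blast
  moreover have "finite {x \<in> {0..p-2}. \<forall>i<t. (g ^ (x + i) mod p) mod v = z i}" by simp
  ultimately show ?thesis unfolding lam_def by (simp add: card_gt_0_iff)
qed

end
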